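(* For every $n\ge1$, $S_n(n)=\dfrac{(-1)^{n-1}}{3\cdot 2^n(n-1)!}$.
   Context: Let $a_0,a_1,\dots$ be indeterminates and $a(x)=\sum_{i\ge0}a_ix^i$. For a positive integer $j$ set $G(x)=\prod_{i=0}^{j-1}\frac{1+a(x)x^2}{1+ix}$, $H(x)=\prod_{i=1-j}^{-1}\frac{1+ix}{1+a(x)x^2}$ (formal power series in $x$), $u=2j-1$, $v=j(j-1)$. For each $n\ge1$ there are unique polynomials $S_0(n),\dots,S_n(n)\in\mathbb{Q}[a_0,\dots,a_{n-2}]$ (rational constants when $n=1$), independent of $j$, such that for every positive integer $j$ the coefficient of $x^{n-1}$ in $\frac{G(x)-H(x)}{x^2}(1+a(x)x^2)$ equals $u\big(a_{n-1}+S_0(n)+S_1(n)v+\cdots+S_n(n)v^n\big)$. *)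

theory Defs
  imports "HOL-Computational_Algebra.Formal_Power_Series"
begin

text \<open>The indeterminates a_0, a_1, ... are modelled by an arbitrary rational
  assignment a :: nat => rat; a(x) is the formal power series with coefficients a.\<close>

definition aser :: "(nat \<Rightarrow> rat) \<Rightarrow> rat fps" where
  "aser a = Abs_fps a"

definition Gser :: "(nat \<Rightarrow> rat) \<Rightarrow> nat \<Rightarrow> rat fps" where
  "Gser a j = (\<Prod>i<j. (1 + aser a * fps_X ^ 2) * inverse (1 + of_nat i * fps_X))"

definition Hser :: "(nat \<Rightarrow> rat) \<Rightarrow> nat \<Rightarrow> rat fps" where
  "Hser a j = (\<Prod>i\<in>{1 - int j .. -1}. (1 + of_int i * fps_X) * inverse (1 + aser a * fps_X ^ 2))"

text \<open>(G - H)/x^2 * (1 + a(x) x^2). G - H has vanishing coefficients of x^0 and x^1,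
  so division by x^2 is exactly fps_shift 2.\<close>
definition Eser :: "(nat \<Rightarrow> rat) \<Rightarrow> nat \<Rightarrow> rat fps" where
  "Eser a j = fps_shift 2 (Gser a j - Hser a j) * (1 + aser a * fps_X ^ 2)"

end

theory Submission
  imports Defs "HOL-Computational_Algebra.Polynomial"
begin


lemma pcompose_power': "pcompose (p ^ n) q = (pcompose p q) ^ n"
  by (induction n) (simp_all add: pcompose_mult pcompose_1)

lemma pcompose_monom': "pcompose (monom a i) q = smult a (q ^ i)"
  by (simp add: monom_altdef pcompose_smult pcompose_power' pcompose_pCons)

lemma coeff_lin_power: "coeff ([:1, s:] ^ n) i = of_nat (n choose i) * (s::'a::comm_ring_1) ^ i"
proof (cases "i \<le> n")
  case True then show ?thesis by (simp add: coeff_linear_poly_power)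
next
  case False
  have "degree ([:1, s:] ^ n) \<le> n"
    by (rule order.trans[OF degree_power_le]) (simp)
  then show ?thesis using False by (simp add: coeff_eq_0 binomial_eq_0)
qed

lemma coeff_pcomp_lin:
  assumes "degree p \<le> N"
  shows "coeff (pcompose p [:1, s:]) k = (\<Sum>i\<le>N. coeff p i * of_nat (i choose k) * (s::'a::comm_ring_1) ^ k)"
proof -
  have "pcompose p [:1, s:] = pcompose (\<Sum>i\<le>N. monom (coeff p i) i) [:1, s:]"
    using poly_as_sum_of_monoms'[OF assms] by simp
  also have "\<dots> = (\<Sum>i\<le>N. smult (coeff p i) ([:1, s:] ^ i))"
    by (simp add: pcompose_sum pcompose_monom')
  finally show ?thesis by (simp add: coeff_sum coeff_lin_power mult.assoc)
qed

lemma coeff_pcomp_top1: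
  assumes "degree p \<le> N"
  shows "coeff (pcompose p [:1, s:]) N = coeff p N * (s::'a::comm_ring_1) ^ N"
proof -
  have "coeff (pcompose p [:1, s:]) N = (\<Sum>i\<le>N. coeff p i * of_nat (i choose N) * s ^ N)"
    by (rule coeff_pcomp_lin[OF assms])
  also have "\<dots> = (\<Sum>i\<in>{N}. coeff p i * of_nat (i choose N) * s ^ N)"
    by (intro sum.mono_neutral_right) (auto simp: binomial_eq_0)
  finally show ?thesis by simp
qed

lemma coeff_pcomp_top2:
  assumes "degree p \<le> Suc M"
  shows "coeff (pcompose p [:1, s:]) M = (coeff p M + of_nat (Suc M) * coeff p (Suc M)) * (s::'a::comm_ring_1) ^ M"
proof -
  have "coeff (pcompose p [:1, s:]) M = (\<Sum>i\<le>Suc M. coeff p i * of_nat (i choose M) * s ^ M)"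
    by (rule coeff_pcomp_lin[OF assms])
  also have "\<dots> = (\<Sum>i\<in>{M, Suc M}. coeff p i * of_nat (i choose M) * s ^ M)"
    by (intro sum.mono_neutral_right) (auto simp: binomial_eq_0)
  finally show ?thesis by (simp add: algebra_simps)
qed

lemma antidiff_ex:
  fixes q :: "rat poly"
  assumes "degree q \<le> n"
  shows "\<exists>p. poly p 0 = 0 \<and> pcompose p [:1, 1:] - p = q \<and> degree p \<le> Suc n"
  using assms
proof (induction n arbitrary: q)
  case 0
  then obtain c where q: "q = [:c:]" using degree0_coeffs by auto
  show ?case
    by (rule exI[of _ "[:0, c:]"]) (simp add: q pcompose_pCons)
next
  case (Suc n)
  define c where "c = coeff q (Suc n)"
  define p0 where "p0 = monom (c / of_nat (n + 2)) (n + 2)"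
  define r where "r = q - (pcompose p0 [:1, 1:] - p0)"
  have dp0: "degree p0 \<le> n + 2" by (simp add: p0_def degree_monom_le)
  have cp0: "coeff (pcompose p0 [:1, 1:]) i = c / of_nat (n + 2) * of_nat ((n + 2) choose i)" for i
  proof -
    have "coeff (pcompose p0 [:1, 1:]) i = (\<Sum>k\<le>n+2. coeff p0 k * of_nat (k choose i) * 1 ^ i)"
      by (rule coeff_pcomp_lin[OF dp0])
    also have "\<dots> = (\<Sum>k\<in>{n+2}. coeff p0 k * of_nat (k choose i) * 1 ^ i)"
      by (intro sum.mono_neutral_right) (auto simp: p0_def coeff_monom)
    finally show ?thesis by (simp add: p0_def)
  qed
  have "degree r \<le> n"
  proof (rule degree_le, intro allI impI)
    fix i assume i: "n < i"
    have cr: "coeff r i = coeff q i - (c / of_nat (n + 2) * of_nat ((n + 2) choose i) - coeff p0 i)"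
      by (simp add: r_def cp0)
    consider "i = Suc n" | "i = n + 2" | "i > n + 2" using i by linarith
    then show "coeff r i = 0"
    proof cases
      case 1 then show ?thesis unfolding cr by (simp add: c_def p0_def coeff_monom)
    next
      case 2 then show ?thesis unfolding cr using Suc.prems by (simp add: p0_def coeff_monom coeff_eq_0)
    next
      case 3 then show ?thesis unfolding cr using Suc.prems by (simp add: p0_def coeff_monom coeff_eq_0 binomial_eq_0)
    qed
  qed
  from Suc.IH[OF this] obtain p1 where p1: "poly p1 0 = 0" "pcompose p1 [:1, 1:] - p1 = r" "degree p1 \<le> Suc n"
    by blast
  show ?case
  proof (rule exI[of _ "p0 + p1"], intro conjI)
    show "poly (p0 + p1) 0 = 0" using p1 by (simp add: p0_def poly_monom)
    show "pcompose (p0 + p1) [:1, 1:] - (p0 + p1) = q"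
      using p1 by (simp add: pcompose_add r_def algebra_simps)
    show "degree (p0 + p1) \<le> Suc (Suc n)"
      using dp0 p1(3) by (intro degree_add_le) auto
  qed
qed

definition antis :: "rat poly \<Rightarrow> bool" where
  "antis P \<longleftrightarrow> (\<forall>t. poly P (1 - t) = - poly P t)"

definition Bp :: "nat \<Rightarrow> rat poly" where
  "Bp n = [:-1, 2:] * [:0, -1, 1:] ^ n"

lemma poly_Bp: "poly (Bp n) t = (2 * t - 1) * (t * (t - 1)) ^ n"
  by (simp add: Bp_def algebra_simps)

lemma antis_Bp: "antis (Bp n)"
  unfolding antis_def poly_Bp by (simp add: algebra_simps)

lemma degree_Bp: "degree (Bp n) = 2 * n + 1"
  unfolding Bp_def by (subst degree_mult_eq) (auto simp: degree_power_eq)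

lemma coeff_Bp: "coeff (Bp n) (2 * n + 1) = 2"
proof -
  have "coeff (Bp n) (2 * n + 1) = lead_coeff (Bp n)" by (simp add: degree_Bp)
  also have "\<dots> = 2" unfolding Bp_def lead_coeff_mult lead_coeff_power by simp
  finally show ?thesis .
qed

lemma antis_pcompose: assumes "antis P" shows "pcompose P [:1, -1:] = - P"
proof -
  have "poly (pcompose P [:1, -1:]) = poly (- P)"
    using assms unfolding antis_def fun_eq_iff poly_pcompose by simp
  then show ?thesis by (simp only: poly_eq_poly_eq_iff)
qed

lemma even_top:
  assumes "antis Q" "degree Q \<le> 2 * k"
  shows "coeff Q (2 * k) = 0"
proof -
  have "coeff (pcompose Q [:1, -1:]) (2 * k) = coeff Q (2 * k) * (-1) ^ (2 * k)"
    by (rule coeff_pcomp_top1[OF assms(2)])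
  then have "- coeff Q (2 * k) = coeff Q (2 * k)"
    using antis_pcompose[OF assms(1)] by simp
  then show ?thesis by simp
qed

lemma degree_drop:
  fixes Q :: "'a::zero poly"
  assumes "degree Q \<le> Suc k" "coeff Q (Suc k) = 0"
  shows "degree Q \<le> k"
proof (rule degree_le, intro allI impI)
  fix i assume "k < i"
  then consider "i = Suc k" | "i > Suc k" by linarith
  then show "coeff Q i = 0" using assms by cases (simp_all add: coeff_eq_0)
qed

lemma degree_zero_coeff:
  fixes Q :: "'a::zero poly"
  assumes "degree Q \<le> 0" "coeff Q 0 = 0"
  shows "Q = 0"
proof (rule poly_eqI)
  fix i show "coeff Q i = coeff 0 i" using assms by (cases i) (simp_all add: coeff_eq_0)
qed

lemma antis_main:
  assumes "antis P" "degree P \<le> 2 * n + 1"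
  shows "\<exists>S. (\<forall>t. poly P t = (2 * t - 1) * (\<Sum>k\<le>n. S k * (t * (t - 1)) ^ k))
             \<and> S n = coeff P (2 * n + 1) / 2"
  using assms
proof (induction n arbitrary: P)
  case (0 P)
  define s where "s = coeff P 1 / 2"
  define Q where "Q = P - smult s (Bp 0)"
  have aQ: "antis Q" using 0(1) antis_Bp[of 0] by (simp add: antis_def Q_def algebra_simps)
  have "degree Q \<le> 1" unfolding Q_def using 0(2) degree_Bp[of 0]
    by (intro degree_diff_le order.trans[OF degree_smult_le]) auto
  moreover have "coeff Q 1 = 0" using coeff_Bp[of 0] by (simp add: Q_def s_def)
  ultimately have "degree Q \<le> 2 * 0"
    using degree_drop[of Q 0] by simp
  from even_top[OF aQ this] this have "Q = 0"
    using degree_zero_coeff[of Q] by simp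
  then have "P = smult s (Bp 0)" by (simp add: Q_def)
  then show ?case
  proof (intro exI[of _ "\<lambda>_. s"] conjI allI)
    fix t :: rat
    show "poly P t = (2 * t - 1) * (\<Sum>k\<le>0. s * (t * (t - 1)) ^ k)"
      unfolding \<open>P = smult s (Bp 0)\<close> by (simp add: poly_Bp)
  qed (simp add: s_def)
next
  case (Suc n P)
  define s where "s = coeff P (2 * Suc n + 1) / 2"
  define Q where "Q = P - smult s (Bp (Suc n))"
  have aQ: "antis Q" using Suc(2) antis_Bp[of "Suc n"] by (simp add: antis_def Q_def algebra_simps)
  have d1: "degree Q \<le> 2 * Suc n + 1" unfolding Q_def using Suc(3) degree_Bp[of "Suc n"]
    by (intro degree_diff_le order.trans[OF degree_smult_le]) auto
  have c1: "coeff Q (2 * Suc n + 1) = 0" using coeff_Bp[of "Suc n"] by (simp add: Q_def s_def)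
  have d2: "degree Q \<le> 2 * Suc n"
    using degree_drop[of Q "2 * Suc n"] c1 d1 by simp
  have c2: "coeff Q (2 * Suc n) = 0" by (rule even_top[OF aQ d2])
  have d3: "degree Q \<le> 2 * n + 1"
    using degree_drop[of Q "2 * n + 1"] c2 d2 by simp
  from Suc.IH[OF aQ d3] obtain S where S: "\<forall>t. poly Q t = (2 * t - 1) * (\<Sum>k\<le>n. S k * (t * (t - 1)) ^ k)"
    by blast
  show ?case
  proof (intro exI[of _ "S(Suc n := s)"] conjI allI)
    fix t :: rat
    have e1: "(\<Sum>k\<le>Suc n. (S(Suc n := s)) k * (t * (t - 1)) ^ k)
        = (\<Sum>k\<le>n. S k * (t * (t - 1)) ^ k) + s * (t * (t - 1)) ^ Suc n"
      by (simp add: sum.atMost_Suc)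
    have "poly P t = poly Q t + s * poly (Bp (Suc n)) t" by (simp add: Q_def)
    also have "\<dots> = (2 * t - 1) * (\<Sum>k\<le>Suc n. (S(Suc n := s)) k * (t * (t - 1)) ^ k)"
      unfolding e1 S[rule_format] poly_Bp by (simp only: distrib_left mult.assoc mult.left_commute)
    finally show "poly P t = (2 * t - 1) * (\<Sum>k\<le>Suc n. (S(Suc n := s)) k * (t * (t - 1)) ^ k)" .
  qed (simp add: s_def)
qed



definition antid :: "rat poly \<Rightarrow> rat poly" where
  "antid q = (SOME p. poly p 0 = 0 \<and> pcompose p [:1, 1:] - p = q \<and> degree p \<le> Suc (degree q))"

lemma antid: "poly (antid q) 0 = 0" "pcompose (antid q) [:1, 1:] - antid q = q"
  "degree (antid q) \<le> Suc (degree q)"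
proof -
  have "\<exists>p. poly p 0 = 0 \<and> pcompose p [:1, 1:] - p = q \<and> degree p \<le> Suc (degree q)"
    by (rule antidiff_ex) simp
  from someI_ex[OF this] show "poly (antid q) 0 = 0" "pcompose (antid q) [:1, 1:] - antid q = q"
    "degree (antid q) \<le> Suc (degree q)" unfolding antid_def by blast+
qed

definition alpha :: "(nat \<Rightarrow> rat) \<Rightarrow> nat \<Rightarrow> rat" where
  "alpha a k = (if k = 0 then 1 else if k = 1 then 0 else a (k - 2))"

fun gp :: "(nat \<Rightarrow> rat) \<Rightarrow> nat \<Rightarrow> rat poly" where
  "gp a 0 = 1"
| "gp a (Suc m) = antid ((\<Sum>k<m. smult (a k) (gp a (m - 1 - k))) - [:0, 1:] * pcompose (gp a m) [:1, 1:])"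

declare gp.simps(2)[simp del]

definition Gp :: "(nat \<Rightarrow> rat) \<Rightarrow> rat \<Rightarrow> rat fps" where
  "Gp a t = Abs_fps (\<lambda>m. poly (gp a m) t)"

lemma gp_rec_poly:
  "poly (gp a (Suc m)) (t + 1) + t * poly (gp a m) (t + 1)
   = poly (gp a (Suc m)) t + (\<Sum>k<m. a k * poly (gp a (m - 1 - k)) t)"
proof -
  let ?R = "(\<Sum>k<m. smult (a k) (gp a (m - 1 - k))) - [:0, 1:] * pcompose (gp a m) [:1, 1:]"
  have "poly (pcompose (gp a (Suc m)) [:1, 1:] - gp a (Suc m)) t = poly ?R t"
    using antid(2)[of ?R] by (simp only: gp.simps(2))
  then show ?thesis by (simp add: poly_pcompose poly_sum algebra_simps)
qed

lemma gp_0: "poly (gp a m) 0 = (if m = 0 then 1 else 0)"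
  by (cases m) (simp_all add: antid(1) gp.simps(2))

lemma Gp_0: "Gp a 0 = 1"
  by (simp add: Gp_def fps_eq_iff gp_0)

lemma A_nth: "fps_nth (1 + aser a * fps_X ^ 2) k = alpha a k"
  by (simp add: alpha_def aser_def fps_X_power_mult_right_nth)

lemma Gp_rec:
  "Gp a (t + 1) * (1 + fps_const t * fps_X) = Gp a t * (1 + aser a * fps_X ^ 2)"
proof (rule fps_ext)
  fix m
  have l: "Gp a (t + 1) * (1 + fps_const t * fps_X) = Gp a (t + 1) + fps_const t * (fps_X * Gp a (t + 1))"
    by (simp add: algebra_simps)
  have r: "Gp a t * (1 + aser a * fps_X ^ 2) = Gp a t + fps_X ^ 2 * (aser a * Gp a t)"
    by (simp add: algebra_simps)
  show "fps_nth (Gp a (t + 1) * (1 + fps_const t * fps_X)) m = fps_nth (Gp a t * (1 + aser a * fps_X ^ 2)) m"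
  proof (cases m)
    case 0 then show ?thesis unfolding l r by (simp add: Gp_def fps_X_power_mult_nth)
  next
    case (Suc m')
    have L: "fps_nth (Gp a (t + 1) + fps_const t * (fps_X * Gp a (t + 1))) (Suc m')
        = poly (gp a (Suc m')) (t + 1) + t * poly (gp a m') (t + 1)"
      by (simp add: Gp_def)
    have R0: "fps_nth (aser a * Gp a t) k = (\<Sum>i=0..k. a i * poly (gp a (k - i)) t)" for k
      by (simp add: fps_mult_nth aser_def Gp_def)
    have R: "fps_nth (Gp a t + fps_X ^ 2 * (aser a * Gp a t)) (Suc m')
        = poly (gp a (Suc m')) t + (\<Sum>k<m'. a k * poly (gp a (m' - 1 - k)) t)"
    proof (cases "m' = 0")
      case True then show ?thesis by (simp add: Gp_def fps_X_power_mult_nth)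
    next
      case False
      then have e: "{0..m' - 1} = {..<m'}" by auto
      have "fps_nth (fps_X ^ 2 * (aser a * Gp a t)) (Suc m') = fps_nth (aser a * Gp a t) (m' - 1)"
        using False by (simp add: fps_X_power_mult_nth)
      also have "\<dots> = (\<Sum>k<m'. a k * poly (gp a (m' - 1 - k)) t)"
        unfolding R0 e by (simp add: diff_commute)
      finally show ?thesis by (simp add: Gp_def)
    qed
    show ?thesis unfolding l r Suc L R using gp_rec_poly[of a m' t] by simp
  qed
qed

lemma Gp_step:
  "Gp a (t + 1) = Gp a t * (1 + aser a * fps_X ^ 2) * inverse (1 + fps_const t * fps_X)"
proof -
  have inv: "(1 + fps_const t * fps_X) * inverse (1 + fps_const t * fps_X) = 1"
    by (rule inverse_mult_eq_1') simp
  have "Gp a (t + 1) = Gp a (t + 1) * ((1 + fps_const t * fps_X) * inverse (1 + fps_const t * fps_X))"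
    by (simp add: inv)
  also have "\<dots> = Gp a t * (1 + aser a * fps_X ^ 2) * inverse (1 + fps_const t * fps_X)"
    by (simp only: mult.assoc[symmetric] Gp_rec)
  finally show ?thesis .
qed

lemma Gp_step':
  "Gp a t = Gp a (t + 1) * (1 + fps_const t * fps_X) * inverse (1 + aser a * fps_X ^ 2)"
proof -
  have inv: "(1 + aser a * fps_X ^ 2) * inverse (1 + aser a * fps_X ^ 2) = 1"
    by (rule inverse_mult_eq_1') simp
  have "Gp a t = Gp a t * ((1 + aser a * fps_X ^ 2) * inverse (1 + aser a * fps_X ^ 2))"
    by (simp add: inv)
  also have "\<dots> = Gp a (t + 1) * (1 + fps_const t * fps_X) * inverse (1 + aser a * fps_X ^ 2)"
    by (simp only: mult.assoc[symmetric] Gp_rec)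
  finally show ?thesis .
qed

lemma Gser_eq: "Gser a j = Gp a (of_nat j)"
proof (induction j)
  case 0 then show ?case by (simp add: Gser_def Gp_0)
next
  case (Suc j)
  have "Gser a (Suc j) = Gser a j * ((1 + aser a * fps_X ^ 2) * inverse (1 + of_nat j * fps_X))"
    by (simp add: Gser_def)
  also have "\<dots> = Gp a (of_nat j + 1)"
    unfolding Suc Gp_step by (simp add: fps_of_nat mult.assoc)
  finally show ?case by (simp add: add.commute)
qed

lemma Hser_eq: "j \<ge> 1 \<Longrightarrow> Hser a j = Gp a (1 - of_nat j)"
proof (induction j rule: dec_induct)
  case base then show ?case by (simp add: Hser_def Gp_0)
next
  case (step j)
  have set: "{1 - int (Suc j) .. -1} = insert (- int j) {1 - int j .. -1}"
    using step.hyps by auto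
  have "Hser a (Suc j) = ((1 + of_int (- int j) * fps_X) * inverse (1 + aser a * fps_X ^ 2)) * Hser a j"
    unfolding Hser_def set by (subst prod.insert) auto
  also have "\<dots> = Gp a (- of_nat j)"
    unfolding step.IH using Gp_step'[of a "- of_nat j"]
    by (simp add: fps_of_int[symmetric] algebra_simps)
  finally show ?case by simp
qed



lemma choose_SucSuc: "2 * (Suc (Suc M) choose M) = (M + 2) * (M + 1)"
  by (induction M) (simp_all add: algebra_simps)

lemma coeff_pcomp_top3:
  assumes "degree p \<le> Suc (Suc M)"
  shows "coeff (pcompose p [:1, s:]) M = (coeff p M + of_nat (Suc M) * coeff p (Suc M)
     + of_nat ((M + 2) * (M + 1)) / 2 * coeff p (Suc (Suc M))) * (s::rat) ^ M"
proof -
  have "coeff (pcompose p [:1, s:]) M = (\<Sum>i\<le>Suc (Suc M). coeff p i * of_nat (i choose M) * s ^ M)"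
    by (rule coeff_pcomp_lin[OF assms])
  also have "\<dots> = (\<Sum>i\<in>{M, Suc M, Suc (Suc M)}. coeff p i * of_nat (i choose M) * s ^ M)"
    by (intro sum.mono_neutral_right) (auto simp: binomial_eq_0)
  also have "of_nat (Suc (Suc M) choose M) = (of_nat ((M + 2) * (M + 1)) / 2 :: rat)"
    using arg_cong[OF choose_SucSuc[of M], of "of_nat :: nat \<Rightarrow> rat"] by simp
  ultimately show ?thesis by (simp add: algebra_simps)
qed

definition cc :: "nat \<Rightarrow> rat" where
  "cc m = (-1) ^ m / (2 ^ m * fact m)"

definition dd :: "nat \<Rightarrow> rat" where
  "dd m = cc m * of_nat m * (2 * of_nat m - 5) / 3"

lemma cc_Suc: "cc (Suc m) = - cc m / (2 * of_nat (Suc m))"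
  by (simp add: cc_def field_simps)

lemma gp_top:
  "degree (gp a m) \<le> 2 * m \<and> coeff (gp a m) (2 * m) = cc m \<and> (m \<ge> 1 \<longrightarrow> coeff (gp a m) (2 * m - 1) = dd m)"
proof (induction m rule: less_induct)
  case (less m)
  show ?case
  proof (cases m)
    case 0 then show ?thesis by (simp add: cc_def)
  next
    case (Suc m)
    have IH: "degree (gp a k) \<le> 2 * k" "coeff (gp a k) (2 * k) = cc k"
      "k \<ge> 1 \<Longrightarrow> coeff (gp a k) (2 * k - 1) = dd k" if "k \<le> m" for k
      using less[of k] that Suc by auto
    define Sp where "Sp = (\<Sum>k<m. smult (a k) (gp a (m - 1 - k)))"
    define g where "g = gp a m"
    define R where "R = Sp - [:0, 1:] * pcompose g [:1, 1:]"
    define p where "p = gp a (Suc m)"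
    have p_def': "p = antid R" by (simp add: p_def R_def Sp_def g_def gp.simps(2))
    have dg: "degree g \<le> 2 * m" using IH(1)[of m] by (simp add: g_def)
    have dSp: "degree Sp \<le> 2 * m"
      unfolding Sp_def
    proof (intro degree_sum_le order.trans[OF degree_smult_le])
      fix k assume "k \<in> {..<m}"
      have "degree (gp a (m - 1 - k)) \<le> 2 * (m - 1 - k)" using IH(1)[of "m - 1 - k"] by simp
      also have "\<dots> \<le> 2 * m" by simp
      finally show "degree (gp a (m - 1 - k)) \<le> 2 * m" .
    qed simp
    have cSp: "coeff Sp i = 0" if "i \<ge> 2 * m" for i
      unfolding Sp_def coeff_sum
    proof (intro sum.neutral ballI)
      fix k assume k: "k \<in> {..<m}"
      have "degree (gp a (m - 1 - k)) \<le> 2 * (m - 1 - k)" using IH(1)[of "m - 1 - k"] by simp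
      moreover have "2 * (m - 1 - k) < i" using k that by auto
      ultimately show "coeff (smult (a k) (gp a (m - 1 - k))) i = 0"
        by (simp add: coeff_eq_0)
    qed
    have dpc: "degree (pcompose g [:1, 1:]) \<le> 2 * m"
      using degree_pcompose_le[of g "[:1, 1:]"] dg by simp
    have dR: "degree R \<le> 2 * m + 1"
      unfolding R_def using dSp dpc
      by (intro degree_diff_le) (auto intro: order.trans[OF degree_pCons_le])
    have dp: "degree p \<le> 2 * m + 2"
      using antid(3)[of R] dR unfolding p_def' by simp
    have eq: "pcompose p [:1, 1:] - p = R" unfolding p_def' by (rule antid(2))
    have cR1: "coeff R (2 * m + 1) = - cc m"
    proof -
      have "coeff (pcompose g [:1, 1:]) (2 * m) = cc m"
        using coeff_pcomp_top1[OF dg, of 1] IH(2)[of m] by (simp add: g_def)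
      then show ?thesis using cSp[of "2 * m + 1"] by (simp add: R_def)
    qed
    have cR0: "coeff R (2 * m) = (if m = 0 then 0 else - (dd m + 2 * of_nat m * cc m))"
    proof (cases m)
      case 0 then show ?thesis by (simp add: R_def Sp_def)
    next
      case (Suc m')
      have "degree g \<le> Suc (2 * m' + 1)" using dg Suc by simp
      from coeff_pcomp_top2[OF this, of 1]
      have "coeff (pcompose g [:1, 1:]) (2 * m' + 1) = dd m + 2 * of_nat m * cc m"
        using IH(2)[of m] IH(3)[of m] Suc by (simp add: g_def algebra_simps)
      then show ?thesis using cSp[of "2 * m"] Suc by (simp add: R_def)
    qed
    have e1: "coeff (pcompose p [:1, 1:] - p) (2 * m + 1) = coeff R (2 * m + 1)" using eq by simp
    have e0: "coeff (pcompose p [:1, 1:] - p) (2 * m) = coeff R (2 * m)" using eq by simp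
    have t2: "coeff (pcompose p [:1, 1:]) (2 * m + 1) = coeff p (2 * m + 1) + of_nat (2 * m + 2) * coeff p (2 * m + 2)"
      using coeff_pcomp_top2[of p "2 * m + 1" 1] dp by simp
    have t3: "coeff (pcompose p [:1, 1:]) (2 * m) = coeff p (2 * m) + of_nat (2 * m + 1) * coeff p (2 * m + 1)
       + of_nat ((2 * m + 2) * (2 * m + 1)) / 2 * coeff p (2 * m + 2)"
      using coeff_pcomp_top3[of p "2 * m" 1] dp by simp
    have top: "coeff p (2 * m + 2) = cc (Suc m)"
      using e1 t2 cR1 by (simp add: cc_Suc field_simps)
    have sec: "coeff p (2 * m + 1) = dd (Suc m)"
    proof -
      have E: "of_nat (2 * m + 1) * coeff p (2 * m + 1) + of_nat ((2 * m + 2) * (2 * m + 1)) / 2 * cc (Suc m)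
          = (if m = 0 then 0 else - (dd m + 2 * of_nat m * cc m))"
        using e0 t3 cR0 top by simp
      have I: "of_nat (2 * m + 1) * dd (Suc m) + of_nat ((2 * m + 2) * (2 * m + 1)) / 2 * cc (Suc m)
          = (if m = 0 then 0 else - (dd m + 2 * of_nat m * cc m))"
      proof (cases "m = 0")
        case True then show ?thesis by (simp add: dd_def cc_def)
      next
        case False
        have cm: "cc m = - 2 * (of_nat m + 1) * cc (Suc m)"
          by (simp add: cc_Suc field_simps)
        show ?thesis unfolding dd_def cm using False
          by (simp add: of_nat_Suc field_simps)
      qed
      from E I have "of_nat (2 * m + 1) * coeff p (2 * m + 1) = of_nat (2 * m + 1) * dd (Suc m)"
        by linarith
      then show ?thesis by (subst (asm) mult_left_cancel) simp_all
    qed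
    show ?thesis using Suc dp top sec by (simp add: p_def)
  qed
qed



definition Bm :: "(nat \<Rightarrow> rat) \<Rightarrow> nat \<Rightarrow> rat poly" where
  "Bm a m = gp a m - pcompose (gp a m) [:1, -1:]"

lemma poly_Bm: "poly (Bm a m) t = poly (gp a m) t - poly (gp a m) (1 - t)"
  by (simp add: Bm_def poly_pcompose)

lemma degree_Bm: "degree (Bm a m) \<le> 2 * m"
proof -
  have "degree (pcompose (gp a m) [:1, -1:]) \<le> 2 * m"
    using degree_pcompose_le[of "gp a m" "[:1, -1:]"] gp_top[of a m] by simp
  then show ?thesis unfolding Bm_def using gp_top[of a m] by (intro degree_diff_le) auto
qed

lemma coeff_Bm_top: "coeff (Bm a (Suc (Suc n))) (2 * n + 4) = 0"
proof -
  have d: "degree (gp a (Suc (Suc n))) \<le> 2 * n + 4" using gp_top[of a "Suc (Suc n)"] by simp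
  show ?thesis unfolding Bm_def using coeff_pcomp_top1[OF d, of "-1"] by simp
qed

lemma coeff_Bm_sec: "coeff (Bm a (Suc (Suc n))) (2 * n + 3)
   = 2 * dd (Suc (Suc n)) + of_nat (2 * n + 4) * cc (Suc (Suc n))"
proof -
  have d: "degree (gp a (Suc (Suc n))) \<le> Suc (2 * n + 3)" using gp_top[of a "Suc (Suc n)"] by simp
  have c1: "coeff (gp a (Suc (Suc n))) (2 * n + 4) = cc (Suc (Suc n))"
    using gp_top[of a "Suc (Suc n)"] by (simp add: numeral_eq_Suc)
  have c2: "coeff (gp a (Suc (Suc n))) (2 * n + 3) = dd (Suc (Suc n))"
    using gp_top[of a "Suc (Suc n)"] by (simp add: numeral_eq_Suc)
  show ?thesis unfolding Bm_def using coeff_pcomp_top2[OF d, of "-1"] c1 c2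
    by (simp add: algebra_simps)
qed

lemma final_value:
  "dd (Suc (Suc n)) + of_nat (n + 2) * cc (Suc (Suc n)) = (-1) ^ n / (3 * 2 ^ Suc n * fact n)"
proof -
  define x where "x = cc n"
  define y where "y = cc (Suc (Suc n))"
  have xy: "x = y * (4 * (of_nat n + 1) * (of_nat n + 2))"
  proof -
    have p1: "(of_nat n + 1 :: rat) > 0" "(of_nat n + 2 :: rat) > 0" by (simp_all add: add_nonneg_pos)
    have "cc (Suc (Suc n)) = cc n / (4 * (of_nat n + 1) * (of_nat n + 2))"
      unfolding cc_Suc by (simp add: of_nat_Suc field_simps)
    then show ?thesis unfolding x_def y_def using p1 by simp
  qed
  have r: "(-1) ^ n / (3 * 2 ^ Suc n * fact n) = (x / 6 :: rat)"
    unfolding x_def cc_def by (simp add: field_simps)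
  show ?thesis unfolding r xy unfolding dd_def y_def[symmetric]
    by (simp add: field_simps)
qed

theorem proposition4p1:
  fixes n :: nat and a :: "nat \<Rightarrow> rat"
  assumes "n \<ge> 1"
  shows "\<exists>S :: nat \<Rightarrow> rat.
           (\<forall>j::nat. j \<ge> 1 \<longrightarrow>
              fps_nth (Eser a j) (n - 1) =
                (2 * of_nat j - 1) *
                (a (n - 1) + (\<Sum>k\<le>n. S k * (of_nat j * (of_nat j - 1)) ^ k)))
         \<and> S n = (-1) ^ (n - 1) / (3 * 2 ^ n * fact (n - 1))"
proof -
  obtain n' where n: "n = Suc n'" using assms by (cases n) auto
  define P where "P = (\<Sum>i\<le>n'. smult (alpha a (n' - i)) (Bm a (i + 2)))"
  have poly_P: "poly P t = (\<Sum>i\<le>n'. alpha a (n' - i) * (poly (gp a (i + 2)) t - poly (gp a (i + 2)) (1 - t)))" for t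
    by (simp add: P_def poly_sum poly_Bm)
  have E: "fps_nth (Eser a j) n' = poly P (of_nat j)" if j: "j \<ge> 1" for j
  proof -
    have D: "fps_nth (Gser a j - Hser a j) m = poly (gp a m) (of_nat j) - poly (gp a m) (1 - of_nat j)" for m
      using j by (simp add: Gser_eq Hser_eq Gp_def)
    have "fps_nth (Eser a j) n' = (\<Sum>i=0..n'. fps_nth (fps_shift 2 (Gser a j - Hser a j)) i * alpha a (n' - i))"
      unfolding Eser_def fps_mult_nth A_nth ..
    also have "\<dots> = poly P (of_nat j)"
      unfolding poly_P fps_shift_nth D atLeast0AtMost by (simp add: mult.commute)
    finally show ?thesis .
  qed
  have aP: "antis P"
    unfolding antis_def poly_P by (simp add: sum_negf[symmetric] algebra_simps)
  have cP: "coeff P k = coeff (Bm a (n' + 2)) k" if k: "k \<ge> 2 * n' + 3" for k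
  proof -
    have "coeff P k = (\<Sum>i\<le>n'. alpha a (n' - i) * coeff (Bm a (i + 2)) k)"
      by (simp add: P_def coeff_sum)
    also have "\<dots> = (\<Sum>i<n'. alpha a (n' - i) * coeff (Bm a (i + 2)) k) + coeff (Bm a (n' + 2)) k"
      by (simp add: lessThan_Suc_atMost[symmetric] alpha_def)
    also have "(\<Sum>i<n'. alpha a (n' - i) * coeff (Bm a (i + 2)) k) = 0"
    proof (intro sum.neutral ballI)
      fix i assume "i \<in> {..<n'}"
      then have "degree (Bm a (i + 2)) < k" using degree_Bm[of a "i + 2"] k by simp
      then show "alpha a (n' - i) * coeff (Bm a (i + 2)) k = 0" by (simp add: coeff_eq_0)
    qed
    finally show ?thesis by simp
  qed
  have dP: "degree P \<le> 2 * n + 1"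
  proof (rule degree_le, intro allI impI)
    fix k assume k: "2 * n + 1 < k"
    then consider "k = 2 * n' + 4" | "k > 2 * n' + 4" using n by linarith
    then show "coeff P k = 0"
    proof cases
      case 1 then show ?thesis using cP[of k] coeff_Bm_top[of a n'] by (simp add: numeral_eq_Suc)
    next
      case 2
      then have "degree (Bm a (n' + 2)) < k" using degree_Bm[of a "n' + 2"] by simp
      then show ?thesis using cP[of k] 2 by (simp add: coeff_eq_0)
    qed
  qed
  have cPtop: "coeff P (2 * n + 1) = 2 * (dd (Suc (Suc n')) + of_nat (n' + 2) * cc (Suc (Suc n')))"
    using cP[of "2 * n' + 3"] coeff_Bm_sec[of a n'] n by (simp add: numeral_eq_Suc algebra_simps)
  from antis_main[OF aP dP] obtain S where
    S: "\<forall>t. poly P t = (2 * t - 1) * (\<Sum>k\<le>n. S k * (t * (t - 1)) ^ k)"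
      "S n = coeff P (2 * n + 1) / 2" by blast
  define S' where "S' = S(0 := S 0 - a (n - 1))"
  show ?thesis
  proof (intro exI[of _ S'] conjI allI impI)
    fix j :: nat assume j: "j \<ge> 1"
    have "(\<Sum>k\<le>n. S' k * (of_nat j * (of_nat j - 1)) ^ k) + a (n - 1)
        = (\<Sum>k\<le>n. S k * (of_nat j * (of_nat j - 1 :: rat)) ^ k)"
      unfolding n sum.atMost_Suc_shift by (simp add: S'_def n)
    then show "fps_nth (Eser a j) (n - 1) =
        (2 * of_nat j - 1) * (a (n - 1) + (\<Sum>k\<le>n. S' k * (of_nat j * (of_nat j - 1)) ^ k))"
      using E[OF j] S(1) n by (simp add: add.commute)
  next
    have "S' n = S n" using n by (simp add: S'_def)
    also have "\<dots> = (-1) ^ n' / (3 * 2 ^ Suc n' * fact n')"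
      using S(2) cPtop final_value[of n'] by simp
    finally show "S' n = (-1) ^ (n - 1) / (3 * 2 ^ n * fact (n - 1))" using n by simp
  qed
qed

end
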